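(* Let \((Q, \preccurlyeq_{Q})\) be a totally ordered set with a smallest element \(q_0\). Then there is a \(\preccurlyeq_{Q}\)-ultrametric \(d \colon Q^2 \to Q\) such that \(d(Q^2) = Q\) and \(\preccurlyeq_{Q}^{0} = \preccurlyeq_{Q}\), where \(\preccurlyeq_Q^0\) denotes the intersection of all partial orders \(\preccurlyeq\) on \(Q\) for which \(d\) is a \(\preccurlyeq\)-pseudoultrametric.
   Context: For a poset \((P,\preccurlyeq)\) with smallest element \(p_0\) and a nonempty set \(X\), \(d\colon X^2\to P\) is a \(\preccurlyeq\)-pseudoultrametric if \(d\) is symmetric, \(d(x,x)=p_0\) for all \(x\), and for every triple \(\langle x_1,x_2,x_3\rangle\) in \(X\) there is a permutation \((i_1,i_2,i_3)\) of \((1,2,3)\) with \(d(x_{i_1},x_{i_3})\preccurlyeq d(x_{i_1},x_{i_2})\) and \(d(x_{i_1},x_{i_2})=d(x_{i_2},x_{i_3})\) (in particular \((P,\preccurlyeq)\) must have a smallest element); it is a \(\preccurlyeq\)-ultrametric if moreover \(d(x,y)=p_0\) iff \(x=y\). \(d(Q^2)\) denotes the range of \(d\). *)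

theory Defs
  imports Main
begin

definition smallest_elem :: "'a set \<Rightarrow> 'a rel \<Rightarrow> 'a \<Rightarrow> bool" where
  "smallest_elem P r p0 \<longleftrightarrow> p0 \<in> P \<and> (\<forall>p\<in>P. (p0, p) \<in> r)"

definition pseudoultrametric ::
  "'b set \<Rightarrow> 'a set \<Rightarrow> 'a rel \<Rightarrow> ('b \<Rightarrow> 'b \<Rightarrow> 'a) \<Rightarrow> bool" where
  "pseudoultrametric X P r d \<longleftrightarrow>
     X \<noteq> {} \<and> partial_order_on P r \<and>
     (\<forall>x\<in>X. \<forall>y\<in>X. d x y \<in> P) \<and>
     (\<exists>p0. smallest_elem P r p0 \<and>
        (\<forall>x\<in>X. \<forall>y\<in>X. d x y = d y x) \<and>
        (\<forall>x\<in>X. d x x = p0) \<and>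
        (\<forall>x1\<in>X. \<forall>x2\<in>X. \<forall>x3\<in>X.
           \<exists>(a, b, c) \<in> {(x1, x2, x3), (x1, x3, x2), (x2, x1, x3),
                          (x2, x3, x1), (x3, x1, x2), (x3, x2, x1)}.
             (d a c, d a b) \<in> r \<and> d a b = d b c))"

definition ultrametric ::
  "'b set \<Rightarrow> 'a set \<Rightarrow> 'a rel \<Rightarrow> ('b \<Rightarrow> 'b \<Rightarrow> 'a) \<Rightarrow> bool" where
  "ultrametric X P r d \<longleftrightarrow>
     pseudoultrametric X P r d \<and>
     (\<forall>p0. smallest_elem P r p0 \<longrightarrow> (\<forall>x\<in>X. \<forall>y\<in>X. d x y = p0 \<longleftrightarrow> x = y))"

definition minimal_order :: "'a set \<Rightarrow> ('a \<Rightarrow> 'a \<Rightarrow> 'a) \<Rightarrow> 'a rel" where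
  "minimal_order Q d = \<Inter>{R. partial_order_on Q R \<and> pseudoultrametric Q Q R d}"

end

theory Submission
  imports Defs
begin

lemma tri:
  assumes refl: "\<And>x. x \<in> Q \<Longrightarrow> (x,x) \<in> L"
  and tot: "\<And>x y. x \<in> Q \<Longrightarrow> y \<in> Q \<Longrightarrow> (x,y) \<in> L \<or> (y,x) \<in> L"
  and anti: "\<And>x y. (x,y) \<in> L \<Longrightarrow> (y,x) \<in> L \<Longrightarrow> x = y"
  and tr: "\<And>x y z. (x,y) \<in> L \<Longrightarrow> (y,z) \<in> L \<Longrightarrow> (x,z) \<in> L"
  and q0: "\<And>x. x \<in> Q \<Longrightarrow> (q0,x) \<in> L" "q0 \<in> Q"
  and d: "d = (\<lambda>x y. if x = y then q0 else if (x,y) \<in> L then y else x)"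
  and x: "x1 \<in> Q" "x2 \<in> Q" "x3 \<in> Q"
  shows "\<exists>(a, b, c) \<in> {(x1, x2, x3), (x1, x3, x2), (x2, x1, x3),
                          (x2, x3, x1), (x3, x1, x2), (x3, x2, x1)}.
             (d a c, d a b) \<in> L \<and> d a b = d b c"
proof -
  have t12: "(x1,x2) \<in> L \<or> (x2,x1) \<in> L" and t13: "(x1,x3) \<in> L \<or> (x3,x1) \<in> L"
    and t23: "(x2,x3) \<in> L \<or> (x3,x2) \<in> L" using tot x by auto
  show ?thesis unfolding d using t12 t13 t23 x refl q0 
    apply simp
    by (smt (verit) anti tr)
qed

theorem proposition4p7:
  fixes Q :: "'a set" and LQ :: "'a rel" and q0 :: 'a
  assumes "linear_order_on Q LQ"
    and "smallest_elem Q LQ q0"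
  shows "\<exists>d :: 'a \<Rightarrow> 'a \<Rightarrow> 'a.
           ultrametric Q Q LQ d \<and>
           (\<lambda>(x, y). d x y) ` (Q \<times> Q) = Q \<and>
           minimal_order Q d = LQ"
proof -
  have po: "partial_order_on Q LQ" using assms(1) by (simp add: linear_order_on_def)
  have sub: "LQ \<subseteq> Q \<times> Q" and refl: "\<And>x. x \<in> Q \<Longrightarrow> (x,x) \<in> LQ"
    and tr: "\<And>x y z. (x,y) \<in> LQ \<Longrightarrow> (y,z) \<in> LQ \<Longrightarrow> (x,z) \<in> LQ"
    and anti: "\<And>x y. (x,y) \<in> LQ \<Longrightarrow> (y,x) \<in> LQ \<Longrightarrow> x = y"
    using po unfolding partial_order_on_def preorder_on_def refl_on_def antisym_def
    by (auto elim: transE)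
  have tot: "\<And>x y. x \<in> Q \<Longrightarrow> y \<in> Q \<Longrightarrow> (x,y) \<in> LQ \<or> (y,x) \<in> LQ"
    using assms(1) refl unfolding linear_order_on_def total_on_def by metis
  have q0: "\<And>x. x \<in> Q \<Longrightarrow> (q0,x) \<in> LQ" "q0 \<in> Q"
    using assms(2) by (auto simp: smallest_elem_def)
  define d where "d = (\<lambda>x y. if x = y then q0 else if (x,y) \<in> LQ then y else x)"
  have dQ: "\<forall>x\<in>Q. \<forall>y\<in>Q. d x y \<in> Q" using q0 by (auto simp: d_def)
  have dsym: "\<forall>x\<in>Q. \<forall>y\<in>Q. d x y = d y x" using anti tot by (auto simp: d_def)
  have dxx: "\<forall>x\<in>Q. d x x = q0" by (simp add: d_def)
  have trip: "\<forall>x1\<in>Q. \<forall>x2\<in>Q. \<forall>x3\<in>Q.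
           \<exists>(a, b, c) \<in> {(x1, x2, x3), (x1, x3, x2), (x2, x1, x3),
                          (x2, x3, x1), (x3, x1, x2), (x3, x2, x1)}.
             (d a c, d a b) \<in> LQ \<and> d a b = d b c"
    apply (intro ballI)
    apply (rule tri[where Q=Q and L=LQ and ?q0.0=q0])
    using refl tot anti tr q0 d_def by auto
  have pum: "pseudoultrametric Q Q LQ d"
    unfolding pseudoultrametric_def using po dQ dsym dxx trip assms(2) q0 by blast
  have um: "ultrametric Q Q LQ d"
    unfolding ultrametric_def
  proof (intro conjI pum allI impI ballI)
    fix p0 x y assume sp: "smallest_elem Q LQ p0" and xy: "x \<in> Q" "y \<in> Q"
    have "p0 = q0" using sp q0 anti by (auto simp: smallest_elem_def)
    then show "d x y = p0 \<longleftrightarrow> x = y" using xy anti q0 by (auto simp: d_def)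
  qed
  have rng: "(\<lambda>(x, y). d x y) ` (Q \<times> Q) = Q"
  proof
    show "(\<lambda>(x, y). d x y) ` (Q \<times> Q) \<subseteq> Q" using dQ by auto
  next
    show "Q \<subseteq> (\<lambda>(x, y). d x y) ` (Q \<times> Q)"
    proof
      fix q assume q: "q \<in> Q"
      have "d q0 q = q" using q q0 by (auto simp: d_def)
      then show "q \<in> (\<lambda>(x, y). d x y) ` (Q \<times> Q)" using q q0
        by (metis (no_types, lifting) SigmaI case_prod_conv image_eqI)
    qed
  qed
  have key: "(a,b) \<in> R" if R: "partial_order_on Q R" "pseudoultrametric Q Q R d"
    and ab: "(a,b) \<in> LQ" for R a b
  proof -
    have a: "a \<in> Q" and b: "b \<in> Q" using ab sub by auto
    have reflR: "\<And>x. x \<in> Q \<Longrightarrow> (x,x) \<in> R"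
      using R(1) unfolding partial_order_on_def preorder_on_def refl_on_def by blast
    obtain p0 where sp: "smallest_elem Q R p0" and dd: "\<forall>x\<in>Q. d x x = p0"
      and tri: "\<forall>x1\<in>Q. \<forall>x2\<in>Q. \<forall>x3\<in>Q.
           \<exists>(a, b, c) \<in> {(x1, x2, x3), (x1, x3, x2), (x2, x1, x3),
                          (x2, x3, x1), (x3, x1, x2), (x3, x2, x1)}.
             (d a c, d a b) \<in> R \<and> d a b = d b c"
      using R(2) unfolding pseudoultrametric_def by blast
    have "p0 = q0" using dd dxx q0 by auto
    show ?thesis
    proof (cases "a = b")
      case True then show ?thesis using reflR a by simp
    next
      case nab: False
      show ?thesis
      proof (cases "a = q0")
        case True then show ?thesis using sp \<open>p0 = q0\<close> b by (simp add: smallest_elem_def)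
      next
        case naq: False
        have nbq: "b \<noteq> q0" using ab anti q0 a naq by metis
        have ba: "(b,a) \<notin> LQ" using anti ab nab by blast
        have qa: "(q0,a) \<in> LQ" "(q0,b) \<in> LQ" using q0 a b by auto
        have aq: "(a,q0) \<notin> LQ" "(b,q0) \<notin> LQ" using anti qa naq nbq by blast+
        have v: "d q0 a = a" "d a q0 = a" "d q0 b = b" "d b q0 = b" "d a b = b" "d b a = b"
          using qa aq ab ba nab naq nbq by (auto simp: d_def)
        have "\<exists>(x, y, z) \<in> {(q0, a, b), (q0, b, a), (a, q0, b),
                          (a, b, q0), (b, q0, a), (b, a, q0)}.
             (d x z, d x y) \<in> R \<and> d x y = d y z"
          using tri a b q0 by blast
        then show ?thesis using v nab naq nbq by auto
      qed
    qed
  qed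
  have "minimal_order Q d = LQ"
    unfolding minimal_order_def
  proof
    show "\<Inter>{R. partial_order_on Q R \<and> pseudoultrametric Q Q R d} \<subseteq> LQ"
      using po pum by blast
    show "LQ \<subseteq> \<Inter>{R. partial_order_on Q R \<and> pseudoultrametric Q Q R d}"
    proof (intro subsetI InterI)
      fix p R assume "p \<in> LQ" "R \<in> {R. partial_order_on Q R \<and> pseudoultrametric Q Q R d}"
      then show "p \<in> R" using key[of R "fst p" "snd p"] by auto
    qed
  qed
  then show ?thesis using um rng by blast
qed

end
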